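(* Let $A=(a_{jk})\in\mathbb C^{4\times 4}$ be a hermitian matrix such that $\bar zAz^T\geq 0$ for all $z\in\mathbb C^4$ with $z_1z_4+z_2z_3=0$. Then $$\sum_{j,k=1}^{4}a_{jk}\,a_{5-j,5-k}\geq 0.$$ *)

theory Defs
  imports "HOL-Analysis.Analysis" "HOL-Library.Complex_Order"
begin

text \<open>Vectors z in C^4 are functions
  nat => complex, only the values at 1..4 matter.\<close>

definition hermitian4 :: "(nat \<Rightarrow> nat \<Rightarrow> complex) \<Rightarrow> bool" where
  "hermitian4 A \<longleftrightarrow> (\<forall>j\<in>{1..4}. \<forall>k\<in>{1..4}. A k j = cnj (A j k))"

definition herm_form4 :: "(nat \<Rightarrow> nat \<Rightarrow> complex) \<Rightarrow> (nat \<Rightarrow> complex) \<Rightarrow> complex" where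
  "herm_form4 A z = (\<Sum>j=1..4. \<Sum>k=1..4. cnj (z j) * A j k * z k)"

end

theory Submission
  imports Defs "HOL-Library.Complex_Order"
begin
lemma sum4: "(\<Sum>j=1..4. f j) = f 1 + f 2 + f 3 + f (4::nat)"
  by (simp add: eval_nat_numeral atLeastAtMostSuc_conv add.commute add.left_commute)
definition F :: "(nat \<Rightarrow> nat \<Rightarrow> complex) \<Rightarrow> (nat \<Rightarrow> complex) \<Rightarrow> (nat \<Rightarrow> complex) \<Rightarrow> complex" where
  "F A u v = (\<Sum>j=1..4. \<Sum>k=1..4. cnj (u j) * A j k * v k)"

lemma form_comb: "herm_form4 A (\<lambda>j. c1 * u j + c2 * v j) =
   cnj c1 * c1 * F A u u + cnj c1 * c2 * F A u v + cnj c2 * c1 * F A v u + cnj c2 * c2 * F A v v"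
proof -
  have "herm_form4 A (\<lambda>j. c1 * u j + c2 * v j) = (\<Sum>j=1..4. \<Sum>k=1..4.
     cnj c1 * c1 * (cnj (u j) * A j k * u k) + cnj c1 * c2 * (cnj (u j) * A j k * v k)
     + cnj c2 * c1 * (cnj (v j) * A j k * u k) + cnj c2 * c2 * (cnj (v j) * A j k * v k))"
    unfolding herm_form4_def by (intro sum.cong refl) (simp add: algebra_simps)
  also have "\<dots> = cnj c1 * c1 * F A u u + cnj c1 * c2 * F A u v + cnj c2 * c1 * F A v u + cnj c2 * c2 * F A v v"
    unfolding F_def by (simp add: sum.distrib sum_distrib_left)
  finally show ?thesis .
qed

lemma F_herm: assumes "hermitian4 A" shows "F A v u = cnj (F A u v)"
proof -
  have h: "cnj (A j k) = A k j" if "j \<in> {1..4}" "k \<in> {1..4}" for j k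
  proof -
    have "A k j = cnj (A j k)" using assms that unfolding hermitian4_def by blast
    then show ?thesis by simp
  qed
  have "cnj (F A u v) = (\<Sum>j=1..4. \<Sum>k=1..4. u j * cnj (A j k) * cnj (v k))"
    unfolding F_def by simp
  also have "\<dots> = (\<Sum>j=1..4. \<Sum>k=1..4. u j * A k j * cnj (v k))"
    by (intro sum.cong refl) (simp add: h)
  also have "\<dots> = (\<Sum>k=1..4. \<Sum>j=1..4. u j * A k j * cnj (v k))"
    by (rule sum.swap)
  also have "\<dots> = F A v u" unfolding F_def by (simp add: mult_ac)
  finally show ?thesis by simp
qed
lemma psd2:
  fixes a d b :: complex
  assumes H: "\<forall>c1 c2. 0 \<le> cnj c1 * c1 * a + cnj c1 * c2 * b + cnj c2 * c1 * cnj b + cnj c2 * c2 * d"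
  shows "\<exists>ra rd. a = of_real ra \<and> d = of_real rd \<and> 0 \<le> ra \<and> 0 \<le> rd \<and> (cmod b)^2 \<le> ra * rd"
proof -
  have "0 \<le> a" using H[rule_format, of 1 0] by simp
  then obtain ra where ra: "a = of_real ra" "0 \<le> ra"
    by (metis complex_eq_iff less_eq_complex_def of_real_0 Re_complex_of_real Im_complex_of_real)
  have "0 \<le> d" using H[rule_format, of 0 1] by simp
  then obtain rd where rd: "d = of_real rd" "0 \<le> rd"
    by (metis complex_eq_iff less_eq_complex_def of_real_0 Re_complex_of_real Im_complex_of_real)
  have nb: "b * cnj b = of_real ((cmod b)^2)" using complex_norm_square[of b] by simp
  show ?thesis
  proof (intro exI conjI)
    show "a = of_real ra" "d = of_real rd" "0 \<le> ra" "0 \<le> rd" using ra rd by auto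
    show "(cmod b)^2 \<le> ra * rd"
    proof (cases "rd = 0")
      case True
      define m where "m = (cmod b)^2"
      define e where "e = - (of_real (ra + 1) * cnj b)"
      have "0 \<le> cnj (of_real m) * of_real m * a + cnj (of_real m) * e * b + cnj e * of_real m * cnj b + cnj e * e * d"
        using H by blast
      also have "\<dots> = of_real (- (m^2 * (ra + 2)))"
      proof -
        have "cnj (of_real m) * of_real m * a + cnj (of_real m) * e * b + cnj e * of_real m * cnj b + cnj e * e * d
          = of_real m * of_real m * of_real ra - 2 * of_real m * of_real (ra + 1) * (b * cnj b)"
          using ra rd True unfolding e_def by (simp add: algebra_simps)
        then show ?thesis unfolding nb m_def by (simp add: power2_eq_square algebra_simps)
      qed
      finally have "m^2 * (ra + 2) \<le> 0" unfolding less_eq_complex_def by simp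
      then have "m = 0" using ra(2)
      proof -
        have "ra + 2 > 0" using ra(2) by simp
        then have "m^2 \<le> 0" using \<open>m^2 * (ra + 2) \<le> 0\<close> by (simp add: mult_le_0_iff)
        then show ?thesis by simp
      qed
      then show ?thesis using True m_def by simp
    next
      case False
      have "0 \<le> cnj (of_real rd) * of_real rd * a + cnj (of_real rd) * (- cnj b) * b + cnj (- cnj b) * of_real rd * cnj b + cnj (- cnj b) * (- cnj b) * d"
        using H by blast
      also have "\<dots> = of_real (rd * (ra * rd - (cmod b)^2))"
      proof -
        have "cnj (of_real rd) * of_real rd * a + cnj (of_real rd) * (- cnj b) * b + cnj (- cnj b) * of_real rd * cnj b + cnj (- cnj b) * (- cnj b) * d
          = of_real rd * (of_real ra * of_real rd - b * cnj b)"
          using ra rd by (simp add: algebra_simps)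
        then show ?thesis unfolding nb by simp
      qed
      finally have "0 \<le> rd * (ra * rd - (cmod b)^2)" unfolding less_eq_complex_def by simp
      then show ?thesis using False rd by (simp add: zero_le_mult_iff)
    qed
  qed
qed

lemma adj_nonneg:
  fixes p11 p22 q11 q22 :: real and x y :: complex
  assumes "0 \<le> p11" "0 \<le> p22" "0 \<le> q11" "0 \<le> q22"
    "(cmod x)^2 \<le> p11 * p22" "(cmod y)^2 \<le> q11 * q22"
  shows "2 * Re (x * cnj y) \<le> p11 * q22 + p22 * q11"
proof -
  have re: "Re (x * cnj y) \<le> cmod x * cmod y"
    using complex_Re_le_cmod[of "x * cnj y"] by (simp add: norm_mult)
  have sq: "(cmod x * cmod y)^2 \<le> ((p11 * q22 + p22 * q11)/2)^2"
  proof -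
    have "(cmod x * cmod y)^2 = (cmod x)^2 * (cmod y)^2" by (simp add: power_mult_distrib)
    also have "\<dots> \<le> (p11 * p22) * (q11 * q22)"
      using assms by (intro mult_mono) (auto intro: mult_nonneg_nonneg)
    also have "\<dots> \<le> ((p11 * q22 + p22 * q11)/2)^2"
    proof -
      have "((p11 * q22 + p22 * q11)/2)^2 = (p11 * p22) * (q11 * q22) + ((p11 * q22 - p22 * q11)/2)^2"
        by (simp add: power2_eq_square field_simps)
      then show ?thesis by simp
    qed
    finally show ?thesis .
  qed
  have h0: "0 \<le> (p11 * q22 + p22 * q11)/2" using assms by simp
  have "cmod x * cmod y \<le> (p11 * q22 + p22 * q11)/2"
    using power2_le_imp_le[OF sq h0] .
  then show ?thesis using re by simp
qed

lemma psd_pair: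
  assumes H: "hermitian4 A" and P: "\<forall>z :: nat \<Rightarrow> complex. z 1 * z 4 + z 2 * z 3 = 0 \<longrightarrow> herm_form4 A z \<ge> 0"
   and N: "\<And>c1 c2. (c1 * u 1 + c2 * v 1) * (c1 * u 4 + c2 * v 4) + (c1 * u 2 + c2 * v 2) * (c1 * u 3 + c2 * v 3) = 0"
  shows "\<exists>ra rd. F A u u = of_real ra \<and> F A v v = of_real rd \<and> 0 \<le> ra \<and> 0 \<le> rd \<and> (cmod (F A u v))^2 \<le> ra * rd"
proof (rule psd2, intro allI)
  fix c1 c2 :: complex
  have "0 \<le> herm_form4 A (\<lambda>j. c1 * u j + c2 * v j)" using P N[of c1 c2] by auto
  then show "0 \<le> cnj c1 * c1 * F A u u + cnj c1 * c2 * F A u v + cnj c2 * c1 * cnj (F A u v) + cnj c2 * c2 * F A v v"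
    using form_comb[of A c1 u c2 v] F_herm[OF H, where u=u and v=v] by simp
qed

lemma final_ineq:
  fixes X11 X22 X12 Y11 Y22 Y12 B11 B12 B21 B22 :: complex
  assumes "X11 = of_real p11" "X22 = of_real p22" "Y11 = of_real q11" "Y22 = of_real q22"
    "0 \<le> p11" "0 \<le> p22" "0 \<le> q11" "0 \<le> q22"
    "(cmod X12)^2 \<le> p11 * p22" "(cmod Y12)^2 \<le> q11 * q22"
  shows "0 \<le> X11*Y22 + X22*Y11 - X12 * cnj Y12 - cnj X12 * Y12 + B11 * cnj B11 + B12 * cnj B12 + B21 * cnj B21 + B22*cnj B22"
proof -
  have e1: "X12 * cnj Y12 + cnj X12 * Y12 = of_real (2 * Re (X12 * cnj Y12))"
    using complex_add_cnj[of "X12 * cnj Y12"] by simp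
  have nb: "b * cnj b = of_real ((cmod b)^2)" for b using complex_norm_square[of b] by simp
  have "X11*Y22 + X22*Y11 - X12 * cnj Y12 - cnj X12 * Y12 + B11 * cnj B11 + B12 * cnj B12 + B21 * cnj B21 + B22*cnj B22
    = X11*Y22 + X22*Y11 - (X12 * cnj Y12 + cnj X12 * Y12) + B11 * cnj B11 + B12 * cnj B12 + B21 * cnj B21 + B22*cnj B22"
    by simp
  also have "\<dots> = of_real (p11 * q22 + p22 * q11 - 2 * Re (X12 * cnj Y12) + (cmod B11)^2 + (cmod B12)^2 + (cmod B21)^2 + (cmod B22)^2)"
    unfolding e1 nb using assms(1-4) by simp
  finally have eq: "X11*Y22 + X22*Y11 - X12 * cnj Y12 - cnj X12 * Y12 + B11 * cnj B11 + B12 * cnj B12 + B21 * cnj B21 + B22*cnj B22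
     = of_real (p11 * q22 + p22 * q11 - 2 * Re (X12 * cnj Y12) + (cmod B11)^2 + (cmod B12)^2 + (cmod B21)^2 + (cmod B22)^2)" .
  have "2 * Re (X12 * cnj Y12) \<le> p11 * q22 + p22 * q11"
    using adj_nonneg[OF assms(5-10)] .
  then have "0 \<le> p11 * q22 + p22 * q11 - 2 * Re (X12 * cnj Y12) + (cmod B11)^2 + (cmod B12)^2 + (cmod B21)^2 + (cmod B22)^2"
    by (simp add: add_nonneg_nonneg)
  then show ?thesis unfolding eq less_eq_complex_def by simp
qed


theorem theorem7:
  fixes A :: "nat \<Rightarrow> nat \<Rightarrow> complex"
  assumes "hermitian4 A"
    and "\<forall>z :: nat \<Rightarrow> complex. z 1 * z 4 + z 2 * z 3 = 0 \<longrightarrow> herm_form4 A z \<ge> 0"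
  shows "(\<Sum>j=1..4. \<Sum>k=1..4. A j k * A (5 - j) (5 - k)) \<ge> 0"
proof -
  note H = assms(1) and P = assms(2)
  define s where "s = (A 1 3 - A 2 4) / (A 1 1 + A 2 2)"
  define e1 :: "nat \<Rightarrow> complex" where "e1 = (\<lambda>j. if j = 1 then 1 else 0)"
  define e2 :: "nat \<Rightarrow> complex" where "e2 = (\<lambda>j. if j = 2 then 1 else 0)"
  define e3 :: "nat \<Rightarrow> complex" where "e3 = (\<lambda>j. if j = 3 then 1 else 0)"
  define e4 :: "nat \<Rightarrow> complex" where "e4 = (\<lambda>j. if j = 4 then 1 else 0)"
  define v1 :: "nat \<Rightarrow> complex" where "v1 = (\<lambda>j. if j = 1 then s else if j = 3 then -1 else 0)"
  define v2 :: "nat \<Rightarrow> complex" where "v2 = (\<lambda>j. if j = 2 then s else if j = 4 then 1 else 0)"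
  have Fe: "F A e1 e1 = A 1 1" "F A e2 e2 = A 2 2" "F A e1 e2 = A 1 2" "F A e1 e3 = A 1 3"
     "F A e2 e4 = A 2 4" "F A e3 e3 = A 3 3" "F A e4 e4 = A 4 4"
    unfolding F_def sum4 by (simp_all add: e1_def e2_def e3_def e4_def)
  have "\<exists>ra rd. F A e1 e1 = of_real ra \<and> F A e2 e2 = of_real rd \<and> 0 \<le> ra \<and> 0 \<le> rd \<and> (cmod (F A e1 e2))^2 \<le> ra * rd"
    by (rule psd_pair[OF H P]) (simp add: e1_def e2_def)
  then obtain r1 r2 where X: "A 1 1 = of_real r1" "A 2 2 = of_real r2" "0 \<le> r1" "0 \<le> r2"
      "(cmod (A 1 2))^2 \<le> r1 * r2"
    unfolding Fe by blast
  obtain q1 q2 where Y: "F A v1 v1 = of_real q1" "F A v2 v2 = of_real q2" "0 \<le> q1" "0 \<le> q2"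
      "(cmod (F A v1 v2))^2 \<le> q1 * q2"
  proof -
    have "\<exists>ra rd. F A v1 v1 = of_real ra \<and> F A v2 v2 = of_real rd \<and> 0 \<le> ra \<and> 0 \<le> rd \<and> (cmod (F A v1 v2))^2 \<le> ra * rd"
      by (rule psd_pair[OF H P]) (simp add: v1_def v2_def algebra_simps)
    then show thesis using that by blast
  qed
  have tr: "F A e1 v1 + F A e2 v2 = 0"
  proof -
    have "F A e1 v1 + F A e2 v2 = s * (A 1 1 + A 2 2) - (A 1 3 - A 2 4)"
      unfolding F_def sum4 by (simp add: e1_def e2_def v1_def v2_def algebra_simps)
    also have "\<dots> = 0"
    proof (cases "A 1 1 + A 2 2 = 0")
      case False
      then show ?thesis unfolding s_def by simp
    next
      case True
      then have "r1 + r2 = 0" using X(1,2) by (metis of_real_add of_real_eq_0_iff)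
      then have r0: "r1 = 0" "r2 = 0" using X(3,4) by auto
      have "\<exists>ra rd. F A e1 e1 = of_real ra \<and> F A e3 e3 = of_real rd \<and> 0 \<le> ra \<and> 0 \<le> rd \<and> (cmod (F A e1 e3))^2 \<le> ra * rd"
        by (rule psd_pair[OF H P]) (simp add: e1_def e3_def)
      then obtain a b where ab: "F A e1 e1 = of_real a" "0 \<le> b" "(cmod (F A e1 e3))^2 \<le> a * b"
        by blast
      have "a = 0" using ab(1) Fe(1) X(1) r0 by simp
      then have "A 1 3 = 0" using ab Fe by simp
      have "\<exists>ra rd. F A e2 e2 = of_real ra \<and> F A e4 e4 = of_real rd \<and> 0 \<le> ra \<and> 0 \<le> rd \<and> (cmod (F A e2 e4))^2 \<le> ra * rd"
        by (rule psd_pair[OF H P]) (simp add: e2_def e4_def)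
      then obtain c d where cd: "F A e2 e2 = of_real c" "0 \<le> d" "(cmod (F A e2 e4))^2 \<le> c * d"
        by blast
      have "c = 0" using cd(1) Fe(2) X(2) r0 by simp
      then have "A 2 4 = 0" using cd Fe by simp
      show ?thesis using True \<open>A 1 3 = 0\<close> \<open>A 2 4 = 0\<close> by simp
    qed
    finally show ?thesis .
  qed
  have I: "(\<Sum>j=1..4. \<Sum>k=1..4. A j k * A (5 - j) (5 - k)) =
     2 * (F A e1 e1 * F A v2 v2 + F A e2 e2 * F A v1 v1 - F A e1 e2 * F A v2 v1 - F A e2 e1 * F A v1 v2
       - (F A e1 v1 + F A e2 v2) * (F A v1 e1 + F A v2 e2)
       + F A e1 v1 * F A v1 e1 + F A e1 v2 * F A v2 e1 + F A e2 v1 * F A v1 e2 + F A e2 v2 * F A v2 e2)"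
    unfolding F_def sum4 by (simp add: e1_def e2_def v1_def v2_def algebra_simps)
  have hh: "F A v u = cnj (F A u v)" for u v using F_herm[OF H] by blast
  have "0 \<le> A 1 1 * F A v2 v2 + A 2 2 * F A v1 v1 - A 1 2 * cnj (F A v1 v2) - cnj (A 1 2) * F A v1 v2
       + F A e1 v1 * cnj (F A e1 v1) + F A e1 v2 * cnj (F A e1 v2) + F A e2 v1 * cnj (F A e2 v1) + F A e2 v2 * cnj (F A e2 v2)"
    by (rule final_ineq[OF X(1) X(2) Y(1) Y(2) X(3) X(4) Y(3) Y(4) X(5) Y(5)])
  also have "\<dots> = (F A e1 e1 * F A v2 v2 + F A e2 e2 * F A v1 v1 - F A e1 e2 * F A v2 v1 - F A e2 e1 * F A v1 v2
       - (F A e1 v1 + F A e2 v2) * (F A v1 e1 + F A v2 e2)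
       + F A e1 v1 * F A v1 e1 + F A e1 v2 * F A v2 e1 + F A e2 v1 * F A v1 e2 + F A e2 v2 * F A v2 e2)"
    using tr by (simp add: Fe hh[of v2 v1] hh[of e2 e1] hh[of v1 e1] hh[of v2 e1] hh[of v1 e2] hh[of v2 e2])
  finally have h: "0 \<le> (F A e1 e1 * F A v2 v2 + F A e2 e2 * F A v1 v1 - F A e1 e2 * F A v2 v1 - F A e2 e1 * F A v1 v2
       - (F A e1 v1 + F A e2 v2) * (F A v1 e1 + F A v2 e2)
       + F A e1 v1 * F A v1 e1 + F A e1 v2 * F A v2 e1 + F A e2 v1 * F A v1 e2 + F A e2 v2 * F A v2 e2)" .
  show ?thesis unfolding I by (rule mult_nonneg_nonneg[OF _ h]) (simp add: less_eq_complex_def)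
qed
end
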